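(* Let $k$ be a field, $e \geq 1$, and $M$ a finite-dimensional $k[T]/T^e$-module. Let $\mu = (d_1, \dots, d_e)$ be a tuple of nonnegative integers, $\sigma$ a permutation of $\{1,\dots,e\}$ and $\mu' = (d_{\sigma(1)}, \dots, d_{\sigma(e)})$. Then there exists a PR datum of type $\mu$ for $M$ if and only if there exists a PR datum of type $\mu'$ for $M$.
   Context: A PR datum of type $(d_1,\dots,d_e)$ for $M$ is a filtration $0 = M_0 \subseteq M_1 \subseteq \dots \subseteq M_e = M$ by $k$-vector subspaces such that $T \cdot M_i \subseteq M_{i-1}$ and $\dim_k M_i/M_{i-1} = d_i$ for $1 \leq i \leq e$. *)

theory Defs
  imports Complex_Main "HOL-Combinatorics.Permutations"
begin

text \<open>The k[T]/T^e-module M is modelled as the whole carrier type 'v of a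
k-vector space (given by the scalar multiplication scale) together with
a k-linear endomorphism T (the action of T) such that T^e = 0.
A PR datum of type (d_1,...,d_e) is a chain of subspaces Mf 0, ..., Mf e.\<close>

definition PR_datum ::
  "('k::field \<Rightarrow> 'v::ab_group_add \<Rightarrow> 'v) \<Rightarrow> ('v \<Rightarrow> 'v) \<Rightarrow> nat \<Rightarrow> (nat \<Rightarrow> nat)
     \<Rightarrow> (nat \<Rightarrow> 'v set) \<Rightarrow> bool" where
  "PR_datum scale T e d Mf \<longleftrightarrow>
     Mf 0 = {0} \<and> Mf e = UNIV \<and>
     (\<forall>i\<le>e. module.subspace scale (Mf i)) \<and>
     (\<forall>i\<in>{1..e}. Mf (i - 1) \<subseteq> Mf i \<and> T ` (Mf i) \<subseteq> Mf (i - 1) \<and>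
        vector_space.dim scale (Mf i) = vector_space.dim scale (Mf (i - 1)) + d i)"

definition has_PR_datum ::
  "('k::field \<Rightarrow> 'v::ab_group_add \<Rightarrow> 'v) \<Rightarrow> ('v \<Rightarrow> 'v) \<Rightarrow> nat \<Rightarrow> (nat \<Rightarrow> nat) \<Rightarrow> bool" where
  "has_PR_datum scale T e d \<longleftrightarrow> (\<exists>Mf. PR_datum scale T e d Mf)"

end

theory Submission
  imports Defs
begin


context finite_dimensional_vector_space begin

lemma rank_nullity_sub:
  assumes lf: "Vector_Spaces.linear scale scale f" and S: "subspace S"
  shows "dim S = dim (S \<inter> {x. f x = 0}) + dim (f ` S)"
proof -
  interpret lf: Vector_Spaces.linear scale scale f by (rule lf)
  obtain B0 where B0: "B0 \<subseteq> S \<inter> {x. f x = 0}" "independent B0"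
      "S \<inter> {x. f x = 0} \<subseteq> span B0" "card B0 = dim (S \<inter> {x. f x = 0})"
    using basis_exists by blast
  obtain B where B: "B0 \<subseteq> B" "B \<subseteq> S" "independent B" "S \<subseteq> span B"
    using maximal_independent_subset_extend[of B0 S] B0 by blast
  have cardB: "card B = dim S" using basis_card_eq_dim B by blast
  define B1 where "B1 = B - B0"
  have finB: "finite B" using B(3) finiteI_independent by blast
  have finB0: "finite B0" "finite B1" using finB B(1) B1_def finite_subset by auto
  have indB1: "independent B1" using B(3) B1_def independent_mono by blast
  have BU: "B = B0 \<union> B1" using B(1) B1_def by blast
  have cardsplit: "card B = card B0 + card B1"
    using BU finB0 card_Un_disjoint B1_def by (metis Diff_disjoint)
  have spB: "span B = S" using B span_minimal S span_subspace by blast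
  have "dim {x + y |x y. x \<in> span B0 \<and> y \<in> span B1} + dim (span B0 \<inter> span B1)
      = dim (span B0) + dim (span B1)"
    using dim_sums_Int[OF subspace_span subspace_span] .
  moreover have "{x + y |x y. x \<in> span B0 \<and> y \<in> span B1} = span B"
    using span_Un BU by simp
  ultimately have "dim (span B0 \<inter> span B1) = 0"
    using cardB cardsplit B0(2) indB1 B(3) dim_span_eq_card_independent by auto
  then have int0: "span B0 \<inter> span B1 \<subseteq> {0}" by simp
  have B1S: "span B1 \<subseteq> S" using spB BU span_mono by blast
  have inj: "inj_on f (span B1)"
    unfolding lf.inj_on_iff_eq_0[OF subspace_span]
    using B1S B0(3) int0 by blast
  have ker: "span B0 \<subseteq> {x. f x = 0}"
    using B0(1) span_minimal lf.subspace_kernel by blast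
  have img: "f ` S = f ` span B1"
  proof
    show "f ` span B1 \<subseteq> f ` S" using B1S by blast
    show "f ` S \<subseteq> f ` span B1"
    proof
      fix z assume "z \<in> f ` S"
      then obtain x where x: "x \<in> span B" "z = f x" using spB by blast
      then obtain a b where ab: "a \<in> span B0" "b \<in> span B1" "x = a + b"
        using span_Un BU by blast
      have "f x = f a + f b" using ab lf.add by simp
      also have "f a = 0" using ker ab by blast
      finally show "z \<in> f ` span B1" using x ab by simp
    qed
  qed
  have "dim (f ` S) = dim (span (f ` B1))" using img lf.span_image by simp
  also have "\<dots> = card (f ` B1)"
    using dim_span_eq_card_independent lf.independent_injective_image[OF indB1 inj] by simp
  also have "\<dots> = card B1" using card_image inj span_superset inj_on_subset by metis
  finally show ?thesis using cardB cardsplit B0(4) by simp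
qed


lemma exists_between:
  assumes U: "subspace U" and W: "subspace W" and UW: "U \<subseteq> W"
    and n1: "dim U \<le> n" and n2: "n \<le> dim W"
  obtains V where "subspace V" "U \<subseteq> V" "V \<subseteq> W" "dim V = n"
proof -
  obtain BU where BU: "BU \<subseteq> U" "independent BU" "U \<subseteq> span BU" "card BU = dim U"
    using basis_exists by blast
  obtain BW where BW: "BU \<subseteq> BW" "BW \<subseteq> W" "independent BW" "W \<subseteq> span BW"
    using maximal_independent_subset_extend[of BU W] BU UW by blast
  have cW: "card BW = dim W" using basis_card_eq_dim BW by blast
  have finW: "finite BW" using BW(3) finiteI_independent by blast
  have finU: "finite BU" using finW BW(1) finite_subset by blast
  have "card (BW - BU) = card BW - card BU" using card_Diff_subset[OF finU BW(1)] .
  then have "n - dim U \<le> card (BW - BU)" using cW BU(4) n2 by linarith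
  then obtain X where X: "X \<subseteq> BW - BU" "card X = n - dim U"
    by (rule obtain_subset_with_card_n)
  define V where "V = span (BU \<union> X)"
  have "BU \<union> X \<subseteq> BW" using BW(1) X(1) by blast
  then have ind: "independent (BU \<union> X)" using BW(3) independent_mono by blast
  have finX: "finite X" using X(1) finW finite_subset by blast
  have "card (BU \<union> X) = card BU + card X"
    using card_Un_disjoint[OF finU finX] X(1) by blast
  moreover have "dim V = card (BU \<union> X)" unfolding V_def using dim_span_eq_card_independent[OF ind] .
  ultimately have dV: "dim V = n" using BU(4) X(2) n1 by linarith
  have sV: "subspace V" unfolding V_def by (rule subspace_span)
  have "span BU \<subseteq> V" unfolding V_def by (rule span_mono) blast
  then have UV: "U \<subseteq> V" using BU(3) by (rule order_trans[rotated])
  have "BU \<union> X \<subseteq> W" using \<open>BU \<union> X \<subseteq> BW\<close> BW(2) by (rule order_trans)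
  then have VW: "V \<subseteq> W" unfolding V_def using W by (rule span_minimal)
  show ?thesis by (rule that[OF sV UV VW dV])
qed

lemma swap_step:
  assumes lf: "Vector_Spaces.linear scale scale T"
    and sA: "subspace A" and sM: "subspace M" and sC: "subspace C"
    and AM: "A \<subseteq> M" and MC: "M \<subseteq> C" and TC: "T ` C \<subseteq> M" and TM: "T ` M \<subseteq> A"
  obtains M' where "subspace M'" "A \<subseteq> M'" "M' \<subseteq> C" "T ` C \<subseteq> M'" "T ` M' \<subseteq> A"
    "dim M' + dim M = dim A + dim C"
proof -
  interpret lf: Vector_Spaces.linear scale scale T by (rule lf)
  define U where "U = {x + y |x y. x \<in> A \<and> y \<in> T ` C}"
  define K where "K = C \<inter> {x. T x \<in> A}"
  have sTC: "subspace (T ` C)" using lf.subspace_image sC by blast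
  have sU: "subspace U" unfolding U_def using subspace_sums sA sTC by blast
  have sK: "subspace K" unfolding K_def using subspace_inter sC lf.subspace_linear_preimage sA by blast
  have UM: "U \<subseteq> M" unfolding U_def using AM TC subspace_add sM by blast
  have MK: "M \<subseteq> K" unfolding K_def using MC TM by blast
  have rC: "dim C = dim (C \<inter> {x. T x = 0}) + dim (T ` C)"
    using rank_nullity_sub[OF lf sC] .
  have rK: "dim K = dim (K \<inter> {x. T x = 0}) + dim (T ` K)"
    using rank_nullity_sub[OF lf sK] .
  have "K \<inter> {x. T x = 0} = C \<inter> {x. T x = 0}" unfolding K_def using subspace_0[OF sA] by auto
  moreover have "T ` K = A \<inter> T ` C" unfolding K_def by auto
  ultimately have rK': "dim K = dim (C \<inter> {x. T x = 0}) + dim (A \<inter> T ` C)" using rK by simp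
  have si: "dim U + dim (A \<inter> T ` C) = dim A + dim (T ` C)"
    unfolding U_def using dim_sums_Int[OF sA sTC] .
  have key: "dim C + dim A = dim K + dim U" using rC rK' si by linarith
  have d1: "dim U \<le> dim M" using UM dim_subset by blast
  have d2: "dim M \<le> dim K" using MK dim_subset by blast
  have d3: "dim M \<le> dim C" using MC dim_subset by blast
  have n1: "dim U \<le> dim A + dim C - dim M" using key d2 d3 by linarith
  have n2: "dim A + dim C - dim M \<le> dim K" using key d1 d3 by linarith
  have UK: "U \<subseteq> K" using UM MK by (rule order_trans)
  obtain V where V: "subspace V" "U \<subseteq> V" "V \<subseteq> K" "dim V = dim A + dim C - dim M"
    using exists_between[OF sU sK UK n1 n2] by blast
  have AU: "A \<subseteq> U" unfolding U_def
  proof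
    fix x assume "x \<in> A"
    moreover have "0 \<in> T ` C" using subspace_0[OF sTC] .
    ultimately show "x \<in> {x + y |x y. x \<in> A \<and> y \<in> T ` C}" by (metis (mono_tags, lifting) add_0_right mem_Collect_eq)
  qed
  have TCU: "T ` C \<subseteq> U" unfolding U_def
  proof
    fix y assume "y \<in> T ` C"
    moreover have "0 \<in> A" using subspace_0[OF sA] .
    ultimately show "y \<in> {x + y |x y. x \<in> A \<and> y \<in> T ` C}" by (metis (mono_tags, lifting) add_0_left mem_Collect_eq)
  qed
  show ?thesis
  proof (rule that[of V])
    show "subspace V" by fact
    show "A \<subseteq> V" using AU V(2) by (rule order_trans)
    show "V \<subseteq> C" using V(3) unfolding K_def by blast
    show "T ` C \<subseteq> V" using TCU V(2) by (rule order_trans)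
    show "T ` V \<subseteq> A" using V(3) unfolding K_def by blast
    show "dim V + dim M = dim A + dim C" using V(4) d3 by simp
  qed
qed

end


lemma swap_PR:
  assumes fd: "finite_dimensional_vector_space scale Basis"
    and lf: "Vector_Spaces.linear scale scale T"
    and P: "PR_datum scale T e d Mf" and i: "1 \<le> i" "i < e"
  shows "has_PR_datum scale T e (d \<circ> Transposition.transpose i (Suc i))"
proof -
  interpret fd: finite_dimensional_vector_space scale Basis by (rule fd)
  from P have P0: "Mf 0 = {0}" "Mf e = UNIV" and Ps: "\<forall>j\<le>e. fd.subspace (Mf j)"
    and P1: "\<forall>j\<in>{1..e}. Mf (j - 1) \<subseteq> Mf j \<and> T ` (Mf j) \<subseteq> Mf (j - 1) \<and>
        fd.dim (Mf j) = fd.dim (Mf (j - 1)) + d j"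
    unfolding PR_datum_def by auto
  have "i \<in> {1..e}" using i by simp
  note a = P1[rule_format, OF this, THEN conjunct1] P1[rule_format, OF this, THEN conjunct2, THEN conjunct1]
     P1[rule_format, OF this, THEN conjunct2, THEN conjunct2]
  have "Suc i \<in> {1..e}" using i by simp
  note b0 = P1[rule_format, OF this]
  have b: "Mf i \<subseteq> Mf (Suc i)" "T ` (Mf (Suc i)) \<subseteq> Mf i" "fd.dim (Mf (Suc i)) = fd.dim (Mf i) + d (Suc i)"
    using b0 by simp_all
  have sA: "fd.subspace (Mf (i - 1))" "fd.subspace (Mf i)" "fd.subspace (Mf (Suc i))"
    using Ps i by simp_all
  obtain M' where M': "fd.subspace M'" "Mf (i - 1) \<subseteq> M'" "M' \<subseteq> Mf (Suc i)"
    "T ` Mf (Suc i) \<subseteq> M'" "T ` M' \<subseteq> Mf (i - 1)"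
    "fd.dim M' + fd.dim (Mf i) = fd.dim (Mf (i - 1)) + fd.dim (Mf (Suc i))"
    using fd.swap_step[OF lf sA a(1) b(1) b(2) a(2)] by blast
  define Mf' where "Mf' = Mf(i := M')"
  have "PR_datum scale T e (d \<circ> Transposition.transpose i (Suc i)) Mf'"
    unfolding PR_datum_def
  proof (intro conjI allI impI)
    show "Mf' 0 = {0}" using P0 i by (simp add: Mf'_def)
    show "Mf' e = UNIV" using P0 i by (simp add: Mf'_def)
    fix j assume "j \<le> e" then show "module.subspace scale (Mf' j)"
      using Ps M'(1) by (simp add: Mf'_def)
  next
    show "\<forall>j\<in>{1..e}. Mf' (j - 1) \<subseteq> Mf' j \<and> T ` Mf' j \<subseteq> Mf' (j - 1) \<and>
        fd.dim (Mf' j) = fd.dim (Mf' (j - 1)) + (d \<circ> Transposition.transpose i (Suc i)) j"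
    proof
    fix j assume j: "j \<in> {1..e}"
    consider "j = i" | "j = Suc i" | "j \<noteq> i" "j \<noteq> Suc i" by blast
    then show "Mf' (j - 1) \<subseteq> Mf' j \<and> T ` Mf' j \<subseteq> Mf' (j - 1) \<and>
        fd.dim (Mf' j) = fd.dim (Mf' (j - 1)) + (d \<circ> Transposition.transpose i (Suc i)) j"
    proof cases
      case 1
      have e1: "Mf' (j - 1) = Mf (i - 1)" "Mf' j = M'" using 1 i by (auto simp add: Mf'_def)
      have e2: "(d \<circ> Transposition.transpose i (Suc i)) j = d (Suc i)" using 1 by simp
      have "fd.dim M' = fd.dim (Mf (i - 1)) + d (Suc i)" using M'(6) a(3) b(3) by linarith
      then show ?thesis unfolding e1 e2 using M'(2,5) by blast
    next
      case 2
      have e1: "Mf' (j - 1) = M'" "Mf' j = Mf (Suc i)" using 2 i by (simp_all add: Mf'_def)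
      have e2: "(d \<circ> Transposition.transpose i (Suc i)) j = d i" using 2 by simp
      have "fd.dim (Mf (Suc i)) = fd.dim M' + d i" using M'(6) a(3) b(3) by linarith
      then show ?thesis unfolding e1 e2 using M'(3,4) by blast
    next
      case 3
      then have "j - 1 \<noteq> i" using j by auto
      have e1: "Mf' (j - 1) = Mf (j - 1)" "Mf' j = Mf j" using 3 \<open>j - 1 \<noteq> i\<close> by (simp_all add: Mf'_def)
      have e2: "(d \<circ> Transposition.transpose i (Suc i)) j = d j" using 3 by simp
      show ?thesis unfolding e1 e2 using P1[rule_format, OF j] .
    qed
    qed
  qed
  then show ?thesis unfolding has_PR_datum_def by blast
qed


lemma transp_closure:
  assumes step: "\<And>d i. 1 \<le> i \<Longrightarrow> i < e \<Longrightarrow> Q d \<Longrightarrow> Q (d \<circ> Transposition.transpose i (Suc i))"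
    and ab: "a \<in> {1..e}" "b \<in> {1..e}"
  shows "Q d \<Longrightarrow> Q (d \<circ> Transposition.transpose a b)"
proof -
  have gen: "\<forall>d. Q d \<longrightarrow> Q (d \<circ> Transposition.transpose a (a + Suc k))" if "1 \<le> a" "a + Suc k \<le> e" for a k
    using that
  proof (induction k)
    case 0
    show ?case
    proof (intro allI impI)
      fix d assume "Q d"
      then have "Q (d \<circ> Transposition.transpose a (Suc a))" using step[of a d] 0 by simp
      then show "Q (d \<circ> Transposition.transpose a (a + Suc 0))" by simp
    qed
  next
    case (Suc k)
    let ?b = "a + Suc k"
    have eq: "Transposition.transpose a (Suc ?b) =
       Transposition.transpose ?b (Suc ?b) \<circ> Transposition.transpose a ?b \<circ> Transposition.transpose ?b (Suc ?b)"
      by (rule ext) (simp add: Transposition.transpose_def)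
    show ?case
    proof (intro allI impI)
      fix d assume "Q d"
      have le: "a + Suc k \<le> e" using Suc.prems by simp
      have IH: "\<forall>d. Q d \<longrightarrow> Q (d \<circ> Transposition.transpose a ?b)"
        by (rule Suc.IH[OF Suc.prems(1) le])
      have A1: "Q (d \<circ> Transposition.transpose ?b (Suc ?b))"
        by (rule step) (use Suc.prems \<open>Q d\<close> in auto)
      have A2: "Q (d \<circ> Transposition.transpose ?b (Suc ?b) \<circ> Transposition.transpose a ?b)"
        using IH A1 by blast
      have "Q (d \<circ> Transposition.transpose ?b (Suc ?b) \<circ> Transposition.transpose a ?b \<circ> Transposition.transpose ?b (Suc ?b))"
        by (rule step) (use Suc.prems A2 in auto)
      then have "Q (d \<circ> Transposition.transpose a (Suc ?b))"
        unfolding eq by (simp only: comp_assoc)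
      moreover have "a + Suc (Suc k) = Suc ?b" by simp
      ultimately show "Q (d \<circ> Transposition.transpose a (a + Suc (Suc k)))" by simp
    qed
  qed
  assume Qd: "Q d"
  consider "a = b" | "a < b" | "b < a" by linarith
  then show "Q (d \<circ> Transposition.transpose a b)"
  proof cases
    case 1
    then show ?thesis using Qd by simp
  next
    case 2
    define k where "k = b - a - 1"
    have k: "b = a + Suc k" using 2 k_def by simp
    have "1 \<le> a" "a + Suc k \<le> e" using ab k by auto
    then have "Q (d \<circ> Transposition.transpose a (a + Suc k))" using gen[of a k] Qd by blast
    then show ?thesis unfolding k .
  next
    case 3
    define k where "k = a - b - 1"
    have k: "a = b + Suc k" using 3 k_def by simp
    have "1 \<le> b" "b + Suc k \<le> e" using ab k by auto
    then have "Q (d \<circ> Transposition.transpose b (b + Suc k))" using gen[of b k] Qd by blast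
    then show ?thesis unfolding k transpose_commute[of "b + Suc k" b] .
  qed
qed

lemma perm_closure:
  assumes step: "\<And>d i. 1 \<le> i \<Longrightarrow> i < e \<Longrightarrow> Q d \<Longrightarrow> Q (d \<circ> Transposition.transpose i (Suc i))"
    and p: "\<sigma> permutes {1..e}"
  shows "\<forall>d. Q d \<longrightarrow> Q (d \<circ> \<sigma>)"
  using p finite_atLeastAtMost
proof (induction rule: permutes_induct)
  case id
  then show ?case by simp
next
  case (swap a b p)
  show ?case
  proof (intro allI impI)
    fix d assume "Q d"
    then have "Q (d \<circ> Transposition.transpose a b)" using transp_closure[where Q=Q and e=e, OF step] swap.hyps by blast
    then have "Q (d \<circ> Transposition.transpose a b \<circ> p)" using swap.IH by blast
    then show "Q (d \<circ> (Transposition.transpose a b \<circ> p))" by (simp add: comp_assoc)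
  qed
qed

theorem mainTheorem4:
  fixes scale :: "'k::field \<Rightarrow> 'v::ab_group_add \<Rightarrow> 'v"
    and T :: "'v \<Rightarrow> 'v" and e :: nat and d :: "nat \<Rightarrow> nat" and \<sigma> :: "nat \<Rightarrow> nat"
  assumes "vector_space scale"
    and "\<exists>B. finite B \<and> module.span scale B = UNIV"
    and "Vector_Spaces.linear scale scale T"
    and "(T ^^ e) = (\<lambda>_. 0)"
    and "e \<ge> 1"
    and "\<sigma> permutes {1..e}"
  shows "has_PR_datum scale T e d \<longleftrightarrow> has_PR_datum scale T e (\<lambda>i. d (\<sigma> i))"
proof -
  interpret vs: vector_space scale by (rule assms(1))
  obtain B0 where B0: "finite B0" "vs.span B0 = UNIV" using assms(2) by blast
  obtain B where B: "vs.independent B" "UNIV \<subseteq> vs.span B"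
    using vs.basis_exists[of UNIV] by blast
  have "finite B" using vs.independent_span_bound[OF B0(1) B(1)] B0(2) by blast
  then have fd: "finite_dimensional_vector_space scale B"
    using B by unfold_locales auto
  have step: "\<And>d i. 1 \<le> i \<Longrightarrow> i < e \<Longrightarrow> has_PR_datum scale T e d \<Longrightarrow>
      has_PR_datum scale T e (d \<circ> Transposition.transpose i (Suc i))"
  proof -
    fix d i assume "1 \<le> i" "i < e" "has_PR_datum scale T e d"
    then obtain Mf where "PR_datum scale T e d Mf" unfolding has_PR_datum_def by blast
    then show "has_PR_datum scale T e (d \<circ> Transposition.transpose i (Suc i))"
      using swap_PR[OF fd assms(3)] \<open>1 \<le> i\<close> \<open>i < e\<close> by blast
  qed
  have fw: "\<forall>d. has_PR_datum scale T e d \<longrightarrow> has_PR_datum scale T e (d \<circ> \<sigma>)"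
    by (rule perm_closure[where Q="has_PR_datum scale T e" and e=e, OF step assms(6)])
  have inv: "inv \<sigma> permutes {1..e}" using permutes_inv[OF assms(6)] .
  have bw: "\<forall>d. has_PR_datum scale T e d \<longrightarrow> has_PR_datum scale T e (d \<circ> inv \<sigma>)"
    by (rule perm_closure[where Q="has_PR_datum scale T e" and e=e, OF step inv])
  have "d \<circ> \<sigma> \<circ> inv \<sigma> = d" using permutes_inverses(1)[OF assms(6)] by (simp add: fun_eq_iff)
  note eqd = this
  have e: "(\<lambda>i. d (\<sigma> i)) = d \<circ> \<sigma>" by (simp add: comp_def)
  show ?thesis unfolding e
  proof
    assume "has_PR_datum scale T e d"
    then show "has_PR_datum scale T e (d \<circ> \<sigma>)" using fw by blast
  next
    assume "has_PR_datum scale T e (d \<circ> \<sigma>)"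
    then have "has_PR_datum scale T e (d \<circ> \<sigma> \<circ> inv \<sigma>)" using bw by blast
    then show "has_PR_datum scale T e d" unfolding eqd .
  qed
qed

end
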